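(* Let $\theta:(0,\infty)\to\mathbb{R}$ satisfy $0<\theta(x)\le 2\arctan(x/2)$ for all $x>0$. Let $\Lambda\ge0$, $m>0$, $\Delta t>0$ with $\Delta t^2\Lambda/m<4$, let $n\ge1$ be an integer, $m_n=m/n$, $\beta>0$, and $\omega>0$. Put $\vartheta=\theta(\omega\Delta t)$ and $$A=\cos\vartheta-\frac{\Delta t^2(\Lambda/m)}{2}\frac{\sin\vartheta}{\omega\Delta t}.$$ Define the $2\times2$ real matrices $$S^{1/2}=\begin{bmatrix}\cos(\vartheta/2)&\sin(\vartheta/2)/\omega\\-\omega\sin(\vartheta/2)&\cos(\vartheta/2)\end{bmatrix},\qquad B^{1/2}=\begin{bmatrix}1&0\\-\Delta t(\Lambda/m)/2&1\end{bmatrix},$$ $$M=B^{1/2}S^{1/2}\begin{bmatrix}1&0\\0&0\end{bmatrix}S^{1/2}B^{1/2},\qquad R=\frac{1}{\beta m_n}B^{1/2}S^{1/2}\begin{bmatrix}0&0\\0&1\end{bmatrix}(B^{1/2}S^{1/2})^{\mathrm T},$$ and consider the Markov chain on $\mathbb{R}^2$ $$\begin{bmatrix}\varrho^{(k)}\\\varphi^{(k)}\end{bmatrix}=M\begin{bmatrix}\varrho^{(k-1)}\\\varphi^{(k-1)}\end{bmatrix}+R^{1/2}\begin{bmatrix}\xi^{(k-1)}\\\eta^{(k-1)}\end{bmatrix},\quad k\ge1,$$ where all $\xi^{(k)},\eta^{(k)}$ are independent standard normal random variables independent of the initial condition. For a probability distribution $\mu$ on $\mathbb{R}$, let $\mu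 p^k$ denote the law of $\varrho^{(k)}$ when $\varrho^{(0)}\sim\mu$ and, independently, $\varphi^{(0)}\sim\mathcal N(0,(\beta m_n)^{-1})$. Then for all integers $k>1$ and all probability distributions $\mu,\nu$ on $\mathbb{R}$, $$\mathcal W_2(\mu p^k,\nu p^k)\le\begin{cases}A^{k-1}\,\mathcal W_2(\mu,\nu)&\text{if }A>0,\\[2pt] \dfrac12\,\dfrac1{k-1}\,\mathcal W_2(\mu,\nu)&\text{otherwise.}\end{cases}$$
   Context: For probability distributions $\mu,\nu$ on $\mathbb{R}$, the $2$-Wasserstein distance is $\mathcal W_2(\mu,\nu)=\big(\inf\mathbb E|X-Y|^2\big)^{1/2}$, the infimum over all couplings $(X,Y)$ with $X\sim\mu$, $Y\sim\nu$ (possibly $+\infty$). $R^{1/2}$ denotes a matrix square root of the positive semidefinite matrix $R$. This chain is the infinite-friction limit of a BAOAB-type thermostatted ring-polymer integrator for one normal mode of frequency $\omega$ in the harmonic potential $V(q)=(\Lambda/2)q^2$. *)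

theory Defs
  imports "HOL-Probability.Probability"
begin

section \<open>2x2 matrices of the integrator\<close>

definition mat2 :: "real \<Rightarrow> real \<Rightarrow> real \<Rightarrow> real \<Rightarrow> real^2^2" where
  "mat2 a b c d = vector [vector [a, b], vector [c, d]]"

definition Shalf :: "real \<Rightarrow> real \<Rightarrow> real^2^2" where
  "Shalf th \<omega> = mat2 (cos (th/2)) (sin (th/2) / \<omega>) (- \<omega> * sin (th/2)) (cos (th/2))"

definition Bhalf :: "real \<Rightarrow> real \<Rightarrow> real \<Rightarrow> real^2^2" where
  "Bhalf dt \<Lambda> m = mat2 1 0 (- dt * (\<Lambda>/m) / 2) 1"

definition Mmat :: "real \<Rightarrow> real \<Rightarrow> real \<Rightarrow> real \<Rightarrow> real \<Rightarrow> real^2^2" where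
  "Mmat th \<omega> dt \<Lambda> m =
     Bhalf dt \<Lambda> m ** Shalf th \<omega> ** mat2 1 0 0 0 ** Shalf th \<omega> ** Bhalf dt \<Lambda> m"

definition Rmat :: "real \<Rightarrow> real \<Rightarrow> real \<Rightarrow> real \<Rightarrow> real \<Rightarrow> real \<Rightarrow> real \<Rightarrow> real^2^2" where
  "Rmat th \<omega> dt \<Lambda> m \<beta> mn =
     (1 / (\<beta> * mn)) *\<^sub>R (Bhalf dt \<Lambda> m ** Shalf th \<omega> ** mat2 0 0 0 1
        ** transpose (Bhalf dt \<Lambda> m ** Shalf th \<omega>))"

definition Acoef :: "real \<Rightarrow> real \<Rightarrow> real \<Rightarrow> real \<Rightarrow> real \<Rightarrow> real" where
  "Acoef th \<omega> dt \<Lambda> m = cos th - dt^2 * (\<Lambda>/m) / 2 * (sin th / (\<omega> * dt))"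

section \<open>The Markov chain and its laws\<close>

text \<open>Law of a pair of independent standard normals, as a vector in R^2.\<close>
definition gauss2 :: "(real^2) measure" where
  "gauss2 = distr (density lborel std_normal_density \<Otimes>\<^sub>M density lborel std_normal_density)
                  borel (\<lambda>(a, b). vector [a, b])"

text \<open>One step: x goes to Mm x + Rh (xi, eta) with fresh independent standard normals.\<close>
definition step_kernel :: "real^2^2 \<Rightarrow> real^2^2 \<Rightarrow> real^2 \<Rightarrow> (real^2) measure" where
  "step_kernel Mm Rh x = distr gauss2 borel (\<lambda>z. Mm *v x + Rh *v z)"

primrec chain_law :: "real^2^2 \<Rightarrow> real^2^2 \<Rightarrow> (real^2) measure \<Rightarrow> nat \<Rightarrow> (real^2) measure" where
  "chain_law Mm Rh P0 0 = P0"
| "chain_law Mm Rh P0 (Suc k) = bind (chain_law Mm Rh P0 k) (step_kernel Mm Rh)"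

text \<open>Initial law: rho0 ~ mu and independently phi0 ~ N(0, 1/(beta m_n)) (variance).\<close>
definition init_law :: "real measure \<Rightarrow> real \<Rightarrow> (real^2) measure" where
  "init_law \<mu> bmn = distr (\<mu> \<Otimes>\<^sub>M density lborel (normal_density 0 (sqrt (1 / bmn))))
                        borel (\<lambda>(a, b). vector [a, b])"

text \<open>mu p^k : law of rho^(k).\<close>
definition plaw :: "real^2^2 \<Rightarrow> real^2^2 \<Rightarrow> real \<Rightarrow> real measure \<Rightarrow> nat \<Rightarrow> real measure" where
  "plaw Mm Rh bmn \<mu> k = distr (chain_law Mm Rh (init_law \<mu> bmn) k) borel (\<lambda>v. v $ 1)"

section \<open>2-Wasserstein distance on R\<close>

definition couplings :: "real measure \<Rightarrow> real measure \<Rightarrow> (real \<times> real) measure set" where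
  "couplings \<mu> \<nu> = {\<pi>. prob_space \<pi> \<and> sets \<pi> = sets (borel \<Otimes>\<^sub>M borel)
                       \<and> distr \<pi> borel fst = \<mu> \<and> distr \<pi> borel snd = \<nu>}"

text \<open>Squared distance: inf over couplings of E|X-Y|^2 (possibly infinite).\<close>
definition W2sq :: "real measure \<Rightarrow> real measure \<Rightarrow> ennreal" where
  "W2sq \<mu> \<nu> = (INF \<pi> \<in> couplings \<mu> \<nu>. \<integral>\<^sup>+ p. ennreal ((fst p - snd p)^2) \<partial>\<pi>)"

definition W2 :: "real measure \<Rightarrow> real measure \<Rightarrow> ennreal" where
  "W2 \<mu> \<nu> = (if W2sq \<mu> \<nu> = \<top> then \<top> else ennreal (sqrt (enn2real (W2sq \<mu> \<nu>))))"

end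

theory Submission imports Defs begin

lemma cont_mulv[continuous_intros]: "continuous_on S f \<Longrightarrow> continuous_on S (\<lambda>x. (A::real^2^2) *v f x)"
  using continuous_on_compose2[OF matrix_vector_mult_linear_continuous_on[of UNIV A], of S f] by auto

lemma vector2_eq: "(vector [a, b] :: real^2) = (\<chi> i. if i = 1 then a else b)"
  by (simp add: vec_eq_iff forall_2)

lemma cont_vector2[continuous_intros]:
  "continuous_on S f \<Longrightarrow> continuous_on S g \<Longrightarrow> continuous_on S (\<lambda>x. (vector [f x, g x] :: real^2))"
  unfolding vector2_eq apply (intro continuous_on_vec_lambda)
  subgoal for i by (cases "i = 1") simp_all
  done


lemma meas_vector2: "(\<lambda>(a, b). (vector [a, b] :: real^2)) \<in> borel_measurable (borel \<Otimes>\<^sub>M borel)"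
proof -
  have "(\<lambda>p::real\<times>real. (vector [fst p, snd p] :: real^2)) \<in> borel_measurable borel"
    by (intro borel_measurable_continuous_onI continuous_intros)
  then show ?thesis unfolding borel_prod case_prod_beta .
qed

lemma std_prob: "prob_space (density lborel std_normal_density)"
  using prob_space_normal_density[of 1 0] by simp

lemma gauss2_prob: "prob_space gauss2" and gauss2_sets: "sets gauss2 = sets borel"
proof -
  interpret A: prob_space "density lborel std_normal_density" by (rule std_prob)
  have P: "prob_space (density lborel std_normal_density \<Otimes>\<^sub>M density lborel std_normal_density)"
    by (intro prob_space_pair std_prob)
  have m: "(\<lambda>(a, b). (vector [a, b] :: real^2)) \<in> density lborel std_normal_density \<Otimes>\<^sub>M density lborel std_normal_density \<rightarrow>\<^sub>M borel"
  proof -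
    have e: "sets (density lborel std_normal_density \<Otimes>\<^sub>M density lborel std_normal_density) = sets ((borel::real measure) \<Otimes>\<^sub>M borel)"
      by (intro sets_pair_measure_cong) simp_all
    show ?thesis using meas_vector2 by (simp only: measurable_cong_sets[OF e refl])
  qed
  show "prob_space gauss2" unfolding gauss2_def
    by (rule prob_space.prob_space_distr[OF P m])
  show "sets gauss2 = sets borel" unfolding gauss2_def by (rule sets_distr)
qed
lemma gauss2_space: "gauss2 \<in> space (subprob_algebra borel)"
  using gauss2_prob gauss2_sets
  by (simp add: space_subprob_algebra prob_space_imp_subprob_space)

lemma meas_K: "step_kernel Mm Rh \<in> borel \<rightarrow>\<^sub>M subprob_algebra borel"
  unfolding step_kernel_def
proof (rule measurable_distr2[where M=borel])
  have "(\<lambda>p::(real^2) \<times> (real^2). Mm *v fst p + Rh *v snd p) \<in> borel_measurable borel"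
    by (intro borel_measurable_continuous_onI continuous_intros)
  then show "(\<lambda>(x, z). Mm *v x + Rh *v z) \<in> borel \<Otimes>\<^sub>M borel \<rightarrow>\<^sub>M borel"
    unfolding borel_prod case_prod_beta .
  show "(\<lambda>x. gauss2) \<in> borel \<rightarrow>\<^sub>M subprob_algebra borel"
    using gauss2_space by (rule measurable_const)
qed

definition K2 :: "real^2^2 \<Rightarrow> real^2^2 \<Rightarrow> (real^2) \<times> (real^2) \<Rightarrow> ((real^2) \<times> (real^2)) measure" where
  "K2 Mm Rh p = distr gauss2 borel (\<lambda>z. (Mm *v fst p + Rh *v z, Mm *v snd p + Rh *v z))"

lemma meas_K2: "K2 Mm Rh \<in> borel \<rightarrow>\<^sub>M subprob_algebra borel"
  unfolding K2_def
proof (rule measurable_distr2[where M=borel])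
  have "(\<lambda>p::((real^2) \<times> (real^2)) \<times> (real^2). (Mm *v fst (fst p) + Rh *v snd p, Mm *v snd (fst p) + Rh *v snd p)) \<in> borel_measurable borel"
    by (intro borel_measurable_continuous_onI continuous_intros)
  then show "(\<lambda>(x, z). (Mm *v fst x + Rh *v z, Mm *v snd x + Rh *v z)) \<in> borel \<Otimes>\<^sub>M borel \<rightarrow>\<^sub>M borel"
    unfolding borel_prod case_prod_beta .
  show "(\<lambda>x. gauss2) \<in> borel \<rightarrow>\<^sub>M subprob_algebra borel"
    using gauss2_space by (rule measurable_const)
qed

lemma K2_prob: "prob_space (K2 Mm Rh p)"
  unfolding K2_def
  apply (rule prob_space.prob_space_distr[OF gauss2_prob])
  apply (subst measurable_cong_sets[OF gauss2_sets refl])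
  by (intro borel_measurable_continuous_onI continuous_intros)

primrec Qc :: "real^2^2 \<Rightarrow> real^2^2 \<Rightarrow> ((real^2) \<times> (real^2)) measure \<Rightarrow> nat \<Rightarrow> ((real^2) \<times> (real^2)) measure" where
  "Qc Mm Rh Q0 0 = Q0"
| "Qc Mm Rh Q0 (Suc k) = Qc Mm Rh Q0 k \<bind> K2 Mm Rh"

lemma Qc_props:
  assumes "prob_space Q0" "sets Q0 = sets borel"
  shows "prob_space (Qc Mm Rh Q0 k) \<and> sets (Qc Mm Rh Q0 k) = sets borel"
proof (induction k)
  case 0 then show ?case using assms by simp
next
  case (Suc k)
  then interpret P: prob_space "Qc Mm Rh Q0 k" by simp
  have ne: "space (Qc Mm Rh Q0 k) \<noteq> {}" by (rule P.not_empty)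
  have m: "K2 Mm Rh \<in> Qc Mm Rh Q0 k \<rightarrow>\<^sub>M subprob_algebra borel"
    using meas_K2 Suc by (simp only: measurable_cong_sets[OF conjunct2[OF Suc] refl])
  have "prob_space (Qc Mm Rh Q0 k \<bind> K2 Mm Rh)"
    by (rule P.prob_space_bind[OF _ m]) (simp add: K2_prob)
  moreover have "sets (Qc Mm Rh Q0 k \<bind> K2 Mm Rh) = sets borel"
    by (rule sets_bind_measurable[OF m ne])
  ultimately show ?case by simp
qed
lemma meas_fst_b: "fst \<in> borel_measurable (borel :: ((real^2) \<times> (real^2)) measure)"
  by (intro borel_measurable_continuous_onI continuous_intros)
lemma meas_snd_b: "snd \<in> borel_measurable (borel :: ((real^2) \<times> (real^2)) measure)"
  by (intro borel_measurable_continuous_onI continuous_intros)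

lemma K2_fst: "distr (K2 Mm Rh p) borel fst = step_kernel Mm Rh (fst p)"
  unfolding K2_def step_kernel_def
  apply (subst distr_distr[OF meas_fst_b])
   apply (subst measurable_cong_sets[OF gauss2_sets refl])
   apply (intro borel_measurable_continuous_onI continuous_intros)
  apply (simp add: comp_def)
  done

lemma K2_snd: "distr (K2 Mm Rh p) borel snd = step_kernel Mm Rh (snd p)"
  unfolding K2_def step_kernel_def
  apply (subst distr_distr[OF meas_snd_b])
   apply (subst measurable_cong_sets[OF gauss2_sets refl])
   apply (intro borel_measurable_continuous_onI continuous_intros)
  apply (simp add: comp_def)
  done

lemma Qc_marg:
  assumes "prob_space Q0" "sets Q0 = sets borel"
  shows "distr Q0 borel fst = P0 \<Longrightarrow> distr (Qc Mm Rh Q0 k) borel fst = chain_law Mm Rh P0 k"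
    and "distr Q0 borel snd = P1 \<Longrightarrow> distr (Qc Mm Rh Q0 k) borel snd = chain_law Mm Rh P1 k"
proof -
  have step: "distr (Qc Mm Rh Q0 (Suc k)) borel f = distr (Qc Mm Rh Q0 k) borel f \<bind> step_kernel Mm Rh"
    if f: "f \<in> borel_measurable (borel :: ((real^2) \<times> (real^2)) measure)"
      and fK: "\<And>p. distr (K2 Mm Rh p) borel f = step_kernel Mm Rh (f p)" for f k
  proof -
    have pk: "prob_space (Qc Mm Rh Q0 k)" and sk: "sets (Qc Mm Rh Q0 k) = sets borel"
      using Qc_props[OF assms] by auto
    have ne: "space (Qc Mm Rh Q0 k) \<noteq> {}" using prob_space.not_empty[OF pk] .
    have m: "K2 Mm Rh \<in> Qc Mm Rh Q0 k \<rightarrow>\<^sub>M subprob_algebra borel"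
      using meas_K2 by (simp only: measurable_cong_sets[OF sk refl])
    have mf: "f \<in> Qc Mm Rh Q0 k \<rightarrow>\<^sub>M borel"
      using f by (simp only: measurable_cong_sets[OF sk refl])
    have "distr (Qc Mm Rh Q0 (Suc k)) borel f = Qc Mm Rh Q0 k \<bind> (\<lambda>p. distr (K2 Mm Rh p) borel f)"
      by (simp add: distr_bind[OF m ne f])
    also have "\<dots> = Qc Mm Rh Q0 k \<bind> (\<lambda>p. step_kernel Mm Rh (f p))"
      by (simp add: fK)
    also have "\<dots> = distr (Qc Mm Rh Q0 k) borel f \<bind> step_kernel Mm Rh"
      by (rule bind_distr[OF mf meas_K ne, symmetric])
    finally show ?thesis .
  qed
  show "distr Q0 borel fst = P0 \<Longrightarrow> distr (Qc Mm Rh Q0 k) borel fst = chain_law Mm Rh P0 k"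
    by (induction k) (simp_all add: step[OF meas_fst_b K2_fst] del: Qc.simps(2))
  show "distr Q0 borel snd = P1 \<Longrightarrow> distr (Qc Mm Rh Q0 k) borel snd = chain_law Mm Rh P1 k"
    by (induction k) (simp_all add: step[OF meas_snd_b K2_snd] del: Qc.simps(2))
qed
lemma Qc_diff:
  assumes "prob_space Q0" "sets Q0 = sets borel"
  shows "g \<in> borel_measurable (borel :: (real^2) measure) \<Longrightarrow>
    (\<integral>\<^sup>+p. g (fst p - snd p) \<partial>Qc Mm Rh Q0 k) = (\<integral>\<^sup>+p. g ((((*v) Mm) ^^ k) (fst p - snd p)) \<partial>Q0)"
proof (induction k arbitrary: g)
  case 0 then show ?case by simp
next
  case (Suc k)
  have pk: "prob_space (Qc Mm Rh Q0 k)" and sk: "sets (Qc Mm Rh Q0 k) = sets borel"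
    using Qc_props[OF assms] by auto
  have m: "K2 Mm Rh \<in> Qc Mm Rh Q0 k \<rightarrow>\<^sub>M subprob_algebra borel"
    using meas_K2 by (simp only: measurable_cong_sets[OF sk refl])
  have mg: "(\<lambda>p::(real^2) \<times> (real^2). g (fst p - snd p)) \<in> borel_measurable borel"
    by (rule measurable_compose[OF _ Suc.prems]) (intro borel_measurable_continuous_onI continuous_intros)
  have mlin: "(\<lambda>v::real^2. Mm *v v) \<in> borel_measurable borel"
    by (intro borel_measurable_continuous_onI continuous_intros)
  have mg2: "(\<lambda>v. g (Mm *v v)) \<in> borel_measurable borel"
    by (rule measurable_compose[OF mlin Suc.prems])
  have inner: "(\<integral>\<^sup>+q. g (fst q - snd q) \<partial>K2 Mm Rh p) = g (Mm *v (fst p - snd p))" for p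
  proof -
    have mz: "(\<lambda>z. (Mm *v fst p + Rh *v z, Mm *v snd p + Rh *v z)) \<in> gauss2 \<rightarrow>\<^sub>M borel"
      apply (subst measurable_cong_sets[OF gauss2_sets refl])
      by (intro borel_measurable_continuous_onI continuous_intros)
    have "(\<integral>\<^sup>+q. g (fst q - snd q) \<partial>K2 Mm Rh p) = (\<integral>\<^sup>+z. g (Mm *v fst p + Rh *v z - (Mm *v snd p + Rh *v z)) \<partial>gauss2)"
      unfolding K2_def
      by (subst nn_integral_distr[OF mz]) (simp_all only: measurable_cong_sets[OF sets_distr refl] mg fst_conv snd_conv)
    also have "\<dots> = (\<integral>\<^sup>+z. g (Mm *v (fst p - snd p)) \<partial>gauss2)"
      by (simp add: matrix_vector_mult_diff_distrib)
    also have "\<dots> = g (Mm *v (fst p - snd p))"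
      using prob_space.emeasure_space_1[OF gauss2_prob] by simp
    finally show ?thesis .
  qed
  have "(\<integral>\<^sup>+p. g (fst p - snd p) \<partial>Qc Mm Rh Q0 (Suc k)) = (\<integral>\<^sup>+p. \<integral>\<^sup>+q. g (fst q - snd q) \<partial>K2 Mm Rh p \<partial>Qc Mm Rh Q0 k)"
    by (simp add: nn_integral_bind[OF mg m])
  also have "\<dots> = (\<integral>\<^sup>+p. g (Mm *v (fst p - snd p)) \<partial>Qc Mm Rh Q0 k)"
    by (simp add: inner)
  also have "\<dots> = (\<integral>\<^sup>+p. g (Mm *v ((((*v) Mm) ^^ k) (fst p - snd p))) \<partial>Q0)"
    by (rule Suc.IH[OF mg2])
  also have "\<dots> = (\<integral>\<^sup>+p. g ((((*v) Mm) ^^ Suc k) (fst p - snd p)) \<partial>Q0)"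
    by simp
  finally show ?case .
qed
definition F0 :: "(real \<times> real) \<times> real \<Rightarrow> (real^2) \<times> (real^2)" where
  "F0 x = (vector [fst (fst x), snd x], vector [snd (fst x), snd x])"

lemma Q0_facts:
  fixes \<pi> :: "(real \<times> real) measure" and N :: "real measure"
  assumes pi: "\<pi> \<in> couplings \<mu> \<nu>" and N: "prob_space N" "sets N = sets borel"
  shows "prob_space (distr (\<pi> \<Otimes>\<^sub>M N) borel F0)"
    and "sets (distr (\<pi> \<Otimes>\<^sub>M N) borel F0) = sets borel"
    and "distr (distr (\<pi> \<Otimes>\<^sub>M N) borel F0) borel fst = distr (\<mu> \<Otimes>\<^sub>M N) borel (\<lambda>(a, b). vector [a, b])"
    and "distr (distr (\<pi> \<Otimes>\<^sub>M N) borel F0) borel snd = distr (\<nu> \<Otimes>\<^sub>M N) borel (\<lambda>(a, b). vector [a, b])"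
    and "h \<in> borel_measurable (borel :: (real^2) measure) \<Longrightarrow>
         (\<integral>\<^sup>+p. h (fst p - snd p) \<partial>distr (\<pi> \<Otimes>\<^sub>M N) borel F0) = (\<integral>\<^sup>+x. h (vector [fst x - snd x, 0]) \<partial>\<pi>)"
proof -
  have ppi: "prob_space \<pi>" and spi: "sets \<pi> = sets (borel \<Otimes>\<^sub>M borel)"
    and m1: "distr \<pi> borel fst = \<mu>" and m2: "distr \<pi> borel snd = \<nu>"
    using pi by (auto simp: couplings_def)
  interpret P: prob_space \<pi> by (rule ppi)
  interpret NN: prob_space N by (rule N(1))
  interpret PN: pair_prob_space \<pi> N by unfold_locales
  have sPN': "sets (\<pi> \<Otimes>\<^sub>M N) = sets (((borel :: real measure) \<Otimes>\<^sub>M (borel :: real measure)) \<Otimes>\<^sub>M (borel :: real measure))"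
    by (rule sets_pair_measure_cong[OF spi N(2)])
  have sPN: "sets (\<pi> \<Otimes>\<^sub>M N) = sets (borel :: ((real \<times> real) \<times> real) measure)"
    using sPN' by (simp only: borel_prod)
  have mF: "F0 \<in> \<pi> \<Otimes>\<^sub>M N \<rightarrow>\<^sub>M borel"
    unfolding measurable_cong_sets[OF sPN refl] F0_def
    by (intro borel_measurable_continuous_onI continuous_intros)
  show "prob_space (distr (\<pi> \<Otimes>\<^sub>M N) borel F0)"
    by (rule PN.prob_space_distr[OF mF])
  show "sets (distr (\<pi> \<Otimes>\<^sub>M N) borel F0) = sets borel" by simp
  have mv: "(\<lambda>(a, b). (vector [a, b] :: real^2)) \<in> borel \<Otimes>\<^sub>M borel \<rightarrow>\<^sub>M borel"
    by (rule meas_vector2)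
  have sN: "distr N borel (\<lambda>x. x) = N" by (rule distr_id2) (simp add: N(2))
  have sfN: "sigma_finite_measure (distr N borel (\<lambda>x. x))" unfolding sN by unfold_locales
  have mfst: "fst \<in> \<pi> \<rightarrow>\<^sub>M (borel :: real measure)"
    unfolding measurable_cong_sets[OF spi refl] borel_prod by (intro borel_measurable_continuous_onI continuous_intros)
  have msnd: "snd \<in> \<pi> \<rightarrow>\<^sub>M (borel :: real measure)"
    unfolding measurable_cong_sets[OF spi refl] borel_prod by (intro borel_measurable_continuous_onI continuous_intros)
  have mid: "(\<lambda>x. x) \<in> N \<rightarrow>\<^sub>M (borel :: real measure)"
    unfolding measurable_cong_sets[OF N(2) refl] by simp
  have mfstb: "(fst :: (real^2) \<times> (real^2) \<Rightarrow> real^2) \<in> borel \<rightarrow>\<^sub>M borel" by (rule meas_fst_b)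
  have msndb: "(snd :: (real^2) \<times> (real^2) \<Rightarrow> real^2) \<in> borel \<rightarrow>\<^sub>M borel" by (rule meas_snd_b)
  have "\<mu> \<Otimes>\<^sub>M N = distr \<pi> borel fst \<Otimes>\<^sub>M distr N borel (\<lambda>x. x)" by (simp add: m1 sN)
  also have "\<dots> = distr (\<pi> \<Otimes>\<^sub>M N) (borel \<Otimes>\<^sub>M borel) (\<lambda>(x, y). (fst x, y))"
    by (rule pair_measure_distr[OF mfst mid sfN])
  finally have e1: "\<mu> \<Otimes>\<^sub>M N = distr (\<pi> \<Otimes>\<^sub>M N) (borel \<Otimes>\<^sub>M borel) (\<lambda>(x, y). (fst x, y))" .
  have "\<nu> \<Otimes>\<^sub>M N = distr \<pi> borel snd \<Otimes>\<^sub>M distr N borel (\<lambda>x. x)" by (simp add: m2 sN)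
  also have "\<dots> = distr (\<pi> \<Otimes>\<^sub>M N) (borel \<Otimes>\<^sub>M borel) (\<lambda>(x, y). (snd x, y))"
    by (rule pair_measure_distr[OF msnd mid sfN])
  finally have e2: "\<nu> \<Otimes>\<^sub>M N = distr (\<pi> \<Otimes>\<^sub>M N) (borel \<Otimes>\<^sub>M borel) (\<lambda>(x, y). (snd x, y))" .
  have mp1: "(\<lambda>(x, y). (fst x, y)) \<in> \<pi> \<Otimes>\<^sub>M N \<rightarrow>\<^sub>M (borel \<Otimes>\<^sub>M borel :: (real \<times> real) measure)"
    unfolding measurable_cong_sets[OF sPN' refl] by measurable
  have mp2: "(\<lambda>(x, y). (snd x, y)) \<in> \<pi> \<Otimes>\<^sub>M N \<rightarrow>\<^sub>M (borel \<Otimes>\<^sub>M borel :: (real \<times> real) measure)"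
    unfolding measurable_cong_sets[OF sPN' refl] by measurable
  show "distr (distr (\<pi> \<Otimes>\<^sub>M N) borel F0) borel fst = distr (\<mu> \<Otimes>\<^sub>M N) borel (\<lambda>(a, b). vector [a, b])"
    unfolding e1
    by (simp add: distr_distr[OF mfstb mF] distr_distr[OF mv mp1] comp_def F0_def case_prod_beta)
  show "distr (distr (\<pi> \<Otimes>\<^sub>M N) borel F0) borel snd = distr (\<nu> \<Otimes>\<^sub>M N) borel (\<lambda>(a, b). vector [a, b])"
    unfolding e2
    by (simp add: distr_distr[OF msndb mF] distr_distr[OF mv mp2] comp_def F0_def case_prod_beta)
  assume h: "h \<in> borel_measurable (borel :: (real^2) measure)"
  have mh: "(\<lambda>p. h (fst p - snd p)) \<in> borel_measurable (borel :: ((real^2) \<times> (real^2)) measure)"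
    by (rule measurable_compose[OF _ h]) (intro borel_measurable_continuous_onI continuous_intros)
  have mh2: "(\<lambda>x. h (vector [fst x - snd x, 0])) \<in> borel_measurable (borel :: (real \<times> real) measure)"
    by (rule measurable_compose[OF _ h]) (intro borel_measurable_continuous_onI continuous_intros)
  have mh3: "(\<lambda>x. h (vector [fst x - snd x, 0])) \<in> borel_measurable \<pi>"
    unfolding measurable_cong_sets[OF spi refl] borel_prod by (rule mh2)
  have dif: "fst (F0 x) - snd (F0 x) = vector [fst (fst x) - snd (fst x), 0]" for x
    by (simp add: F0_def vec_eq_iff forall_2)
  have "(\<integral>\<^sup>+p. h (fst p - snd p) \<partial>distr (\<pi> \<Otimes>\<^sub>M N) borel F0) = (\<integral>\<^sup>+x. h (fst (F0 x) - snd (F0 x)) \<partial>(\<pi> \<Otimes>\<^sub>M N))"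
    by (rule nn_integral_distr[OF mF]) (simp only: measurable_cong_sets[OF sets_distr refl] mh)
  also have "\<dots> = (\<integral>\<^sup>+x. h (vector [fst (fst x) - snd (fst x), 0]) \<partial>(\<pi> \<Otimes>\<^sub>M N))"
    by (simp only: dif)
  also have "\<dots> = (\<integral>\<^sup>+x. \<integral>\<^sup>+y. h (vector [fst x - snd x, 0]) \<partial>N \<partial>\<pi>)"
  proof -
    have mm: "(\<lambda>x. h (vector [fst (fst x) - snd (fst x), 0])) \<in> borel_measurable (\<pi> \<Otimes>\<^sub>M N)"
      by (rule measurable_compose[OF measurable_fst mh3])
    show ?thesis using NN.nn_integral_fst[OF mm] by simp
  qed
  also have "\<dots> = (\<integral>\<^sup>+x. h (vector [fst x - snd x, 0]) \<partial>\<pi>)"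
    by (simp add: NN.emeasure_space_1)
  finally show "(\<integral>\<^sup>+p. h (fst p - snd p) \<partial>distr (\<pi> \<Otimes>\<^sub>M N) borel F0) = (\<integral>\<^sup>+x. h (vector [fst x - snd x, 0]) \<partial>\<pi>)" .
qed
lemma mat2_nth: "mat2 a b c d $ 1 $ 1 = a" "mat2 a b c d $ 1 $ 2 = b" "mat2 a b c d $ 2 $ 1 = c" "mat2 a b c d $ 2 $ 2 = d"
  by (simp_all add: mat2_def)

lemma mat2_mult: "mat2 a b c d ** mat2 e f g h = mat2 (a*e+b*g) (a*f+b*h) (c*e+d*g) (c*f+d*h)"
  by (simp add: vec_eq_iff forall_2 matrix_matrix_mult_def mat2_nth sum_2)

lemma mat2_mulv: "mat2 a b c d *v v = vector [a * v$1 + b * v$2, c * v$1 + d * v$2]"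
  by (simp add: vec_eq_iff forall_2 matrix_vector_mult_def mat2_nth sum_2)

lemma mat2_cong: "a = a' \<Longrightarrow> b = b' \<Longrightarrow> c = c' \<Longrightarrow> d = d' \<Longrightarrow> mat2 a b c d = mat2 a' b' c' d'"
  by simp

lemma Mmat_eq:
  assumes "w \<noteq> 0" "m \<noteq> 0"
  shows "Mmat th w dt L m = mat2
  (cos (th/2) * (cos (th/2) - dt*(L/m)/2 * sin (th/2) / w))
  (cos (th/2) * (sin (th/2) / w))
  ((- dt * (L/m)/2 * cos (th/2) - w * sin (th/2)) * (cos (th/2) - dt*(L/m)/2 * sin (th/2) / w))
  ((- dt * (L/m)/2 * cos (th/2) - w * sin (th/2)) * (sin (th/2) / w))"
  unfolding Mmat_def Shalf_def Bhalf_def mat2_mult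
  by (intro mat2_cong) (use assms in \<open>simp_all add: field_simps\<close>)

lemma iter_rank1:
  fixes u1 u2 w1 w2 :: real
  shows "(((*v) (mat2 (u1*w1) (u1*w2) (u2*w1) (u2*w2))) ^^ Suc j) (vector [t, 0])
     = vector [u1 * ((w1*u1 + w2*u2)^j * w1 * t), u2 * ((w1*u1 + w2*u2)^j * w1 * t)]"
proof (induction j)
  case 0 then show ?case by (simp add: mat2_mulv mult.assoc)
next
  case (Suc j)
  show ?case
    apply (subst funpow.simps(2))
    apply (subst comp_apply)
    apply (subst Suc)
    apply (simp add: mat2_mulv vec_eq_iff forall_2)
    apply (simp add: algebra_simps)
    done
qed
lemma trig_id:
  fixes th w dt L m :: real
  assumes "w \<noteq> 0" "dt \<noteq> 0" "m \<noteq> 0"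
  defines "u1 \<equiv> cos (th/2)" and "u2 \<equiv> - dt * (L/m)/2 * cos (th/2) - w * sin (th/2)"
    and "w1 \<equiv> cos (th/2) - dt*(L/m)/2 * sin (th/2) / w" and "w2 \<equiv> sin (th/2) / w"
  shows "w1 * u1 + w2 * u2 = Acoef th w dt L m" and "u1 * w1 = (1 + Acoef th w dt L m) / 2"
proof -
  have th: "th = 2 * (th/2)" by simp
  have c: "cos th = cos (th/2)^2 - sin (th/2)^2" by (subst th, rule cos_double)
  have s: "sin th = 2 * sin (th/2) * cos (th/2)" by (subst th, rule sin_double)
  have cc: "cos th = 2 * cos (th/2)^2 - 1" by (subst th, rule cos_double_cos)
  show "w1 * u1 + w2 * u2 = Acoef th w dt L m"
    unfolding u1_def u2_def w1_def w2_def Acoef_def c s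
    using assms(1-3) by (simp add: field_simps power2_eq_square)
  show "u1 * w1 = (1 + Acoef th w dt L m) / 2"
    unfolding u1_def u2_def w1_def w2_def Acoef_def cc s
    using assms(1-3) by (simp add: field_simps power2_eq_square)
qed

lemma A_bounds:
  fixes th w dt L m :: real
  assumes w: "w > 0" and dt: "dt > 0" and m: "m > 0" and L: "L \<ge> 0" and stab: "dt^2 * L / m < 4"
    and th0: "0 < th" and th1: "th \<le> 2 * arctan (w * dt / 2)"
  shows "-1 \<le> Acoef th w dt L m" and "Acoef th w dt L m \<le> 1"
proof -
  define t where "t = th / 2"
  have th_eq: "th = 2 * t" using t_def by simp
  have t0: "0 < t" using th0 t_def by simp
  have t1: "t \<le> arctan (w * dt / 2)" using th1 t_def by simp
  have t2: "t < pi / 2" using t1 arctan_ubound[of "w*dt/2"] by linarith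
  have cpos: "cos t > 0" using t0 t2 by (intro cos_gt_zero) auto
  have spos: "sin t > 0" using t0 t2 by (intro sin_gt_zero) auto
  have tan_le: "tan t \<le> w * dt / 2"
  proof -
    have "tan t \<le> tan (arctan (w * dt / 2))"
      using t1 t0 arctan_ubound[of "w*dt/2"] arctan_lbound[of "w*dt/2"]
      by (intro tan_mono_le) auto
    then show ?thesis by (simp only: tan_arctan)
  qed
  have s_le: "sin t \<le> w * dt / 2 * cos t"
    using tan_le cpos by (simp add: tan_def divide_le_eq)
  define q where "q = dt * L / (2 * m * w)"
  have q0: "q \<ge> 0" unfolding q_def using dt L m w by simp
  have qx: "q * (w * dt / 2) < 1"
  proof -
    have "q * (w * dt / 2) = dt^2 * L / m / 4" unfolding q_def using w m by (simp add: field_simps power2_eq_square)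
    moreover have "dt^2 * L / m / 4 < 1"
    proof -
      define X where "X = dt^2 * L / m"
      have "X < 4" using stab X_def by simp
      then have "X / 4 < 1" by simp
      then show ?thesis using X_def by simp
    qed
    ultimately show ?thesis by (simp only:)
  qed
  have A_eq: "Acoef th w dt L m = cos (2*t) - q * sin (2*t)"
    unfolding Acoef_def q_def th_eq using w dt m by (simp add: field_simps power2_eq_square)
  have A2: "Acoef th w dt L m = 2 * cos t ^ 2 - 1 - q * (2 * sin t * cos t)"
    unfolding A_eq cos_double_cos sin_double by simp
  have "q * sin t \<le> q * (w * dt / 2 * cos t)" using s_le q0 by (rule mult_left_mono)
  also have "\<dots> = (q * (w * dt / 2)) * cos t" by simp
  also have "\<dots> \<le> cos t" using qx cpos by (simp add: mult_le_cancel_right1 less_imp_le)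
  finally have "q * sin t \<le> cos t" .
  then have "q * (2 * sin t * cos t) \<le> 2 * cos t ^ 2"
    using cpos by (simp add: power2_eq_square mult_right_mono ac_simps)
  then show "-1 \<le> Acoef th w dt L m" unfolding A2 by simp
  have "q * (2 * sin t * cos t) \<ge> 0" using q0 spos cpos by simp
  moreover have "cos t ^ 2 \<le> 1" using cos_le_one[of t] cpos by (simp add: power_le_one)
  ultimately show "Acoef th w dt L m \<le> 1" unfolding A2 by linarith
qed
lemma pow_aux:
  fixes a :: real
  assumes "0 \<le> a" "a \<le> 1"
  shows "a^j * (1 + real j * (1 - a)) \<le> 1"
proof (induction j)
  case 0 then show ?case by simp
next
  case (Suc j)
  have "a^(Suc j) * (1 + real (Suc j) * (1 - a)) = a^j * (1 + real j * (1 - a)) - a^j * ((1 - a)^2 * (real j + 1))"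
    by (simp add: algebra_simps power2_eq_square)
  also have "\<dots> \<le> a^j * (1 + real j * (1 - a))"
    using assms by simp
  finally show ?case using Suc by linarith
qed

lemma coef_bound:
  fixes A :: real
  assumes "-1 \<le> A" "A \<le> 1" "j \<ge> 1"
  shows "\<bar>(1 + A) / 2 * A^j\<bar> \<le> (if A > 0 then A^j else 1/2 * (1 / real j))"
proof (cases "A > 0")
  case True
  then have "\<bar>(1 + A) / 2 * A^j\<bar> = (1 + A) / 2 * A^j" by simp
  also have "\<dots> \<le> 1 * A^j" using True assms by (intro mult_right_mono) auto
  finally show ?thesis using True by simp
next
  case False
  define a where "a = - A"
  have a0: "0 \<le> a" and a1: "a \<le> 1" using False assms a_def by auto
  have "\<bar>(1 + A) / 2 * A^j\<bar> = (1 - a) / 2 * a^j"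
    using a0 a1 by (simp add: a_def abs_mult power_abs)
  moreover have "(1 - a) * a^j * real j \<le> 1"
  proof -
    have "(1 - a) * a^j * real j \<le> a^j * (1 + real j * (1 - a))"
      using a0 by (simp add: algebra_simps)
    then show ?thesis using pow_aux[OF a0 a1, of j] by linarith
  qed
  then have "(1 - a) * a^j \<le> 1 / real j" using assms(3) by (simp add: field_simps)
  ultimately show ?thesis using False by simp
qed
lemma funpow_mulv_meas: "((*v) (Mm::real^2^2) ^^ k) \<in> borel_measurable borel"
proof (induction k)
  case 0 then show ?case by simp
next
  case (Suc k)
  have mlin: "(\<lambda>v::real^2. Mm *v v) \<in> borel_measurable borel"
    by (intro borel_measurable_continuous_onI continuous_intros)
  show ?case unfolding funpow.simps(2) by (rule measurable_comp[OF Suc mlin])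
qed

lemma ennreal_cmult_INF:
  fixes c :: ennreal
  assumes "c < top" "S \<noteq> {}"
  shows "c * (INF x\<in>S. f x) = (INF x\<in>S. c * f x)"
proof -
  have mono: "mono (\<lambda>x::ennreal. c * x)" by (intro monoI mult_left_mono) auto
  have cont: "continuous_on UNIV (\<lambda>x::ennreal. c * x)"
    using ennreal_continuous_on_cmult[OF assms(1) continuous_on_id] by simp
  have "(\<lambda>x. c * x) (Inf (f ` S)) = Inf ((\<lambda>x. c * x) ` f ` S)"
  proof (rule continuous_at_Inf_mono[OF mono])
    have "isCont (\<lambda>x. c * x) (Inf (f ` S))"
      using cont by (simp add: continuous_on_eq_continuous_within)
    then show "continuous (at_right (Inf (f ` S))) (\<lambda>x. c * x)"
      by (rule continuous_at_imp_continuous_at_within)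
  qed (use assms(2) in auto)
  then show ?thesis by (simp add: image_image)
qed
lemma coupling_step:
  fixes Mm Rh :: "real^2^2"
  assumes pi: "\<pi> \<in> couplings \<mu> \<nu>" and bmn: "bmn > 0"
    and key: "\<And>t. ((*v) Mm ^^ k) (vector [t, 0]) $ 1 = C * t"
  shows "\<exists>\<rho>\<in>couplings (plaw Mm Rh bmn \<mu> k) (plaw Mm Rh bmn \<nu> k).
           (\<integral>\<^sup>+p. ennreal ((fst p - snd p)^2) \<partial>\<rho>) = ennreal (C^2) * (\<integral>\<^sup>+p. ennreal ((fst p - snd p)^2) \<partial>\<pi>)"
proof -
  define N where "N = density lborel (\<lambda>x. ennreal (normal_density 0 (sqrt (1 / bmn)) x))"
  have pN: "prob_space N" unfolding N_def by (rule prob_space_normal_density) (use bmn in simp)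
  have sN: "sets N = sets borel" unfolding N_def by simp
  define Q0 where "Q0 = distr (\<pi> \<Otimes>\<^sub>M N) borel F0"
  note QF = Q0_facts[OF pi pN sN, folded Q0_def]
  define Q where "Q = Qc Mm Rh Q0 k"
  have pQ: "prob_space Q" and sQ: "sets Q = sets borel"
    using Qc_props[OF QF(1,2)] Q_def by auto
  have il: "init_law \<mu>' bmn = distr (\<mu>' \<Otimes>\<^sub>M N) borel (\<lambda>(a, b). vector [a, b])" for \<mu>'
    unfolding init_law_def N_def by simp
  have mQ1: "distr Q borel fst = chain_law Mm Rh (init_law \<mu> bmn) k"
    unfolding Q_def by (rule Qc_marg(1)[OF QF(1,2)]) (simp add: il QF(3))
  have mQ2: "distr Q borel snd = chain_law Mm Rh (init_law \<nu> bmn) k"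
    unfolding Q_def by (rule Qc_marg(2)[OF QF(1,2)]) (simp add: il QF(4))
  define G where "G = (\<lambda>p::(real^2) \<times> (real^2). (fst p $ 1, snd p $ 1))"
  have mGb: "G \<in> borel \<rightarrow>\<^sub>M borel"
    unfolding G_def by (intro borel_measurable_continuous_onI continuous_intros)
  have mG: "G \<in> Q \<rightarrow>\<^sub>M borel"
    using mGb by (simp only: measurable_cong_sets[OF sQ refl])
  define \<rho> where "\<rho> = distr Q borel G"
  have c1: "(\<lambda>v::real^2. v $ 1) \<in> borel \<rightarrow>\<^sub>M borel"
    by (intro borel_measurable_continuous_onI continuous_intros)
  have mfst: "(fst :: real \<times> real \<Rightarrow> real) \<in> borel \<rightarrow>\<^sub>M borel"
    by (intro borel_measurable_continuous_onI continuous_intros)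
  have msnd: "(snd :: real \<times> real \<Rightarrow> real) \<in> borel \<rightarrow>\<^sub>M borel"
    by (intro borel_measurable_continuous_onI continuous_intros)
  have mfstQ: "fst \<in> Q \<rightarrow>\<^sub>M (borel :: (real^2) measure)"
    using meas_fst_b by (simp only: measurable_cong_sets[OF sQ refl])
  have msndQ: "snd \<in> Q \<rightarrow>\<^sub>M (borel :: (real^2) measure)"
    using meas_snd_b by (simp only: measurable_cong_sets[OF sQ refl])
  have "\<rho> \<in> couplings (plaw Mm Rh bmn \<mu> k) (plaw Mm Rh bmn \<nu> k)"
    unfolding couplings_def
  proof (intro CollectI conjI)
    show "prob_space \<rho>" unfolding \<rho>_def by (rule prob_space.prob_space_distr[OF pQ mG])
    show "sets \<rho> = sets (borel \<Otimes>\<^sub>M borel)" unfolding \<rho>_def by (simp only: sets_distr borel_prod)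
    show "distr \<rho> borel fst = plaw Mm Rh bmn \<mu> k"
      unfolding \<rho>_def plaw_def mQ1[symmetric]
      by (subst distr_distr[OF mfst mG], subst distr_distr[OF c1 mfstQ]) (simp add: comp_def G_def)
    show "distr \<rho> borel snd = plaw Mm Rh bmn \<nu> k"
      unfolding \<rho>_def plaw_def mQ2[symmetric]
      by (subst distr_distr[OF msnd mG], subst distr_distr[OF c1 msndQ]) (simp add: comp_def G_def)
  qed
  moreover have "(\<integral>\<^sup>+p. ennreal ((fst p - snd p)^2) \<partial>\<rho>) = ennreal (C^2) * (\<integral>\<^sup>+p. ennreal ((fst p - snd p)^2) \<partial>\<pi>)"
  proof -
    define h where "h = (\<lambda>v::real^2. ennreal ((v $ 1)^2))"
    have mh: "h \<in> borel_measurable borel"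
      unfolding h_def by (intro measurable_compose[OF _ measurable_ennreal]) (intro borel_measurable_continuous_onI continuous_intros)
    have mhk: "(\<lambda>v. h (((*v) Mm ^^ k) v)) \<in> borel_measurable borel"
      by (rule measurable_compose[OF funpow_mulv_meas mh])
    have mcost: "(\<lambda>p::real \<times> real. ennreal ((fst p - snd p)^2)) \<in> borel_measurable borel"
      by (intro measurable_compose[OF _ measurable_ennreal]) (intro borel_measurable_continuous_onI continuous_intros)
    have spi0: "sets \<pi> = sets (borel \<Otimes>\<^sub>M borel)" using pi by (simp add: couplings_def)
    have spi: "sets \<pi> = sets borel" using spi0 by (simp only: borel_prod)
    have mcost_pi: "(\<lambda>p::real \<times> real. ennreal ((fst p - snd p)^2)) \<in> borel_measurable \<pi>"
      using mcost by (simp only: measurable_cong_sets[OF spi refl])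
    have "(\<integral>\<^sup>+p. ennreal ((fst p - snd p)^2) \<partial>\<rho>) = (\<integral>\<^sup>+q. ennreal ((fst (G q) - snd (G q))^2) \<partial>Q)"
      unfolding \<rho>_def
      by (rule nn_integral_distr[OF mG]) (simp only: measurable_cong_sets[OF sets_distr refl] mcost)
    also have "\<dots> = (\<integral>\<^sup>+q. h (fst q - snd q) \<partial>Q)"
      by (simp add: G_def h_def)
    also have "\<dots> = (\<integral>\<^sup>+p. h (((*v) Mm ^^ k) (fst p - snd p)) \<partial>Q0)"
      unfolding Q_def by (rule Qc_diff[OF QF(1,2) mh])
    also have "\<dots> = (\<integral>\<^sup>+x. h (((*v) Mm ^^ k) (vector [fst x - snd x, 0])) \<partial>\<pi>)"
      by (rule QF(5)[OF mhk])
    also have "\<dots> = (\<integral>\<^sup>+x. ennreal (C^2) * ennreal ((fst x - snd x)^2) \<partial>\<pi>)"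
      by (simp add: h_def key power_mult_distrib ennreal_mult')
    also have "\<dots> = ennreal (C^2) * (\<integral>\<^sup>+p. ennreal ((fst p - snd p)^2) \<partial>\<pi>)"
      by (rule nn_integral_cmult[OF mcost_pi])
    finally show ?thesis .
  qed
  ultimately show ?thesis by blast
qed
lemma W2sq_bound:
  assumes step: "\<And>\<pi>. \<pi> \<in> couplings \<mu> \<nu> \<Longrightarrow> \<exists>\<rho>\<in>couplings P P'.
     (\<integral>\<^sup>+p. ennreal ((fst p - snd p)^2) \<partial>\<rho>) = ennreal c * (\<integral>\<^sup>+p. ennreal ((fst p - snd p)^2) \<partial>\<pi>)"
    and ne: "couplings \<mu> \<nu> \<noteq> {}"
  shows "W2sq P P' \<le> ennreal c * W2sq \<mu> \<nu>"
proof -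
  have "W2sq P P' \<le> (INF \<pi>\<in>couplings \<mu> \<nu>. ennreal c * (\<integral>\<^sup>+p. ennreal ((fst p - snd p)^2) \<partial>\<pi>))"
  proof (rule INF_greatest)
    fix \<pi> assume "\<pi> \<in> couplings \<mu> \<nu>"
    then obtain \<rho> where r: "\<rho> \<in> couplings P P'"
      and e: "(\<integral>\<^sup>+p. ennreal ((fst p - snd p)^2) \<partial>\<rho>) = ennreal c * (\<integral>\<^sup>+p. ennreal ((fst p - snd p)^2) \<partial>\<pi>)"
      using step by blast
    have "W2sq P P' \<le> (\<integral>\<^sup>+p. ennreal ((fst p - snd p)^2) \<partial>\<rho>)"
      unfolding W2sq_def using r by (rule INF_lower)
    then show "W2sq P P' \<le> ennreal c * (\<integral>\<^sup>+p. ennreal ((fst p - snd p)^2) \<partial>\<pi>)" using e by simp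
  qed
  also have "\<dots> = ennreal c * W2sq \<mu> \<nu>"
    unfolding W2sq_def by (rule ennreal_cmult_INF[symmetric]) (use ne in auto)
  finally show ?thesis .
qed

theorem theorem3:
  fixes \<theta> :: "real \<Rightarrow> real" and \<Lambda> m dt \<beta> \<omega> :: real and n k :: nat
    and \<mu> \<nu> :: "real measure" and Rh :: "real^2^2"
  assumes theta: "\<forall>x>0. 0 < \<theta> x \<and> \<theta> x \<le> 2 * arctan (x / 2)"
    and Lam: "\<Lambda> \<ge> 0" and mpos: "m > 0" and dtpos: "dt > 0" and stab: "dt^2 * \<Lambda> / m < 4"
    and npos: "n \<ge> 1" and bpos: "\<beta> > 0" and wpos: "\<omega> > 0"
    and Rh_sym: "transpose Rh = Rh"
    and Rh_psd: "\<forall>v. 0 \<le> v \<bullet> (Rh *v v)"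
    and Rh_sq: "Rh ** Rh = Rmat (\<theta> (\<omega> * dt)) \<omega> dt \<Lambda> m \<beta> (m / real n)"
    and k: "k > 1"
    and mu: "prob_space \<mu>" "sets \<mu> = sets borel"
    and nu: "prob_space \<nu>" "sets \<nu> = sets borel"
  shows "W2 (plaw (Mmat (\<theta> (\<omega> * dt)) \<omega> dt \<Lambda> m) Rh (\<beta> * (m / real n)) \<mu> k)
            (plaw (Mmat (\<theta> (\<omega> * dt)) \<omega> dt \<Lambda> m) Rh (\<beta> * (m / real n)) \<nu> k)
         \<le> ennreal (if Acoef (\<theta> (\<omega> * dt)) \<omega> dt \<Lambda> m > 0
                     then Acoef (\<theta> (\<omega> * dt)) \<omega> dt \<Lambda> m ^ (k - 1)
                     else 1 / 2 * (1 / real (k - 1))) * W2 \<mu> \<nu>"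
proof -
  define th where "th = \<theta> (\<omega> * dt)"
  define A where "A = Acoef th \<omega> dt \<Lambda> m"
  define j where "j = k - 1"
  have kj: "k = Suc j" and j1: "j \<ge> 1" using k j_def by auto
  define coef where "coef = (if A > 0 then A ^ j else 1 / 2 * (1 / real j))"
  define C where "C = (1 + A) / 2 * A ^ j"
  define Mm where "Mm = Mmat th \<omega> dt \<Lambda> m"
  define bmn where "bmn = \<beta> * (m / real n)"
  define P where "P = plaw Mm Rh bmn \<mu> k"
  define P' where "P' = plaw Mm Rh bmn \<nu> k"
  have bmn0: "bmn > 0" unfolding bmn_def using bpos mpos npos by simp
  have th0: "0 < th" and th1: "th \<le> 2 * arctan (\<omega> * dt / 2)"
    using theta wpos dtpos unfolding th_def by auto
  have Ab: "-1 \<le> A" "A \<le> 1"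
    unfolding A_def using A_bounds[OF wpos dtpos mpos Lam stab th0 th1] by auto
  have Cb: "\<bar>C\<bar> \<le> coef" unfolding C_def coef_def by (rule coef_bound[OF Ab j1])
  have coef0: "coef > 0" unfolding coef_def using j1 by auto
  define u1 where "u1 = cos (th/2)"
  define u2 where "u2 = - dt * (\<Lambda>/m)/2 * cos (th/2) - \<omega> * sin (th/2)"
  define w1 where "w1 = cos (th/2) - dt*(\<Lambda>/m)/2 * sin (th/2) / \<omega>"
  define w2 where "w2 = sin (th/2) / \<omega>"
  have Mm_eq: "Mm = mat2 (u1*w1) (u1*w2) (u2*w1) (u2*w2)"
    unfolding Mm_def u1_def u2_def w1_def w2_def using wpos mpos by (simp add: Mmat_eq)
  have tr: "w1 * u1 + w2 * u2 = A" "u1 * w1 = (1 + A) / 2"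
    unfolding u1_def u2_def w1_def w2_def A_def
    using trig_id[of \<omega> dt m th \<Lambda>] wpos dtpos mpos by auto
  have key: "((*v) Mm ^^ k) (vector [t, 0]) $ 1 = C * t" for t
    unfolding Mm_eq kj iter_rank1 tr(1) C_def tr(2)[symmetric] by (simp add: mult_ac)
  have step: "\<exists>\<rho>\<in>couplings P P'.
     (\<integral>\<^sup>+p. ennreal ((fst p - snd p)^2) \<partial>\<rho>) = ennreal (C^2) * (\<integral>\<^sup>+p. ennreal ((fst p - snd p)^2) \<partial>\<pi>)"
    if "\<pi> \<in> couplings \<mu> \<nu>" for \<pi>
    unfolding P_def P'_def by (rule coupling_step[OF that bmn0 key])
  have goal: "W2 P P' \<le> ennreal coef * W2 \<mu> \<nu>"
  proof (cases "W2sq \<mu> \<nu> = \<top>")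
    case True
    then show ?thesis using coef0 by (simp add: W2_def ennreal_mult_top)
  next
    case False
    then have ne: "couplings \<mu> \<nu> \<noteq> {}" unfolding W2sq_def by auto
    have le: "W2sq P P' \<le> ennreal (C^2) * W2sq \<mu> \<nu>" by (rule W2sq_bound[OF step ne])
    define X where "X = enn2real (W2sq \<mu> \<nu>)"
    have X0: "X \<ge> 0" unfolding X_def by simp
    have WX: "W2sq \<mu> \<nu> = ennreal X" unfolding X_def using False by (simp add: ennreal_enn2real_if)
    have le2: "W2sq P P' \<le> ennreal (C^2 * X)" using le WX X0 by (simp add: ennreal_mult)
    then have ntop: "W2sq P P' \<noteq> \<top>" by (auto simp: top_unique)
    have le3: "enn2real (W2sq P P') \<le> C^2 * X"
      using le2 X0 by (metis ennreal_le_iff ennreal_enn2real_if ntop mult_nonneg_nonneg zero_le_power2)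
    have "W2 P P' = ennreal (sqrt (enn2real (W2sq P P')))" unfolding W2_def using ntop by simp
    also have "\<dots> \<le> ennreal (sqrt (C^2 * X))" using le3 by (intro ennreal_leI real_sqrt_le_mono)
    also have "\<dots> = ennreal (\<bar>C\<bar> * sqrt X)" by (simp add: real_sqrt_mult)
    also have "\<dots> \<le> ennreal (coef * sqrt X)" using Cb X0 by (intro ennreal_leI mult_right_mono) auto
    also have "\<dots> = ennreal coef * W2 \<mu> \<nu>"
      unfolding W2_def using False coef0 X0 by (simp add: X_def ennreal_mult)
    finally show ?thesis .
  qed
  then show ?thesis
    unfolding P_def P'_def Mm_def bmn_def coef_def A_def th_def j_def .
qed

end
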